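(* Let $C>0$ and let $\Psi_{\mathrm{ENO}}:\mathbb{R}\to\mathbb{R}$ be $\Psi_{\mathrm{ENO}}(r)=1$ if $|r|\ge 1$ and $\Psi_{\mathrm{ENO}}(r)=r$ if $|r|\le 1$. Fix indices $i,n$ and real numbers $Q_i^{n-2},Q_i^{n-1},Q_i^n,Q_i^{n+1},Q_{i-1}^n$ satisfying $$Q_i^n + \tfrac12\Psi_{\mathrm{ENO}}(r_i^n)\,(Q_i^{n+1}-Q_i^n) + C\,Q_i^n = Q_i^{n-1} + \tfrac12\Psi_{\mathrm{ENO}}(r_i^{n-1})\,(Q_i^{n}-Q_i^{n-1}) + C\,Q_{i-1}^n,$$ where $r_i^n = \frac{Q_i^n-Q_i^{n-1}}{Q_i^{n+1}-Q_i^n}$ and $r_i^{n-1}=\frac{Q_i^{n-1}-Q_i^{n-2}}{Q_i^{n}-Q_i^{n-1}}$, with the convention that a product $\Psi_{\mathrm{ENO}}(r)\cdot(\text{denominator of } r)$ is $0$ whenever that denominator vanishes. Then $$\min\{Q_i^{n-1},Q_{i-1}^n\}\le Q_i^n\le \max\{Q_i^{n-1},Q_{i-1}^n\}.$$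
   Context: This is the (fully implicit, four time levels) scheme for $\kappa\partial_tq+v\partial_xq=0$ obtained from the time approximation $\tau\partial_tq_i^n\approx Q_i^n-Q_i^{n-1}+\frac{1-w}{2}(Q_i^{n+1}-2Q_i^n+Q_i^{n-1})+\frac{w}{2}(Q_i^n-2Q_i^{n-1}+Q_i^{n-2})$ with a solution-dependent ENO weight $w\in\{0,1\}$ ($w=0$ if $|r_i^n|\ge1$, $w=1$ if $|r_i^n|\le1$), written via $\psi=1-w+wr$; $C=C_i^n=v^n\tau/(\kappa h_i)$ is the local Courant number. *)

theory Defs
  imports Complex_Main
begin

text \<open>ENO limiter: value 1 if |r| >= 1, value r if |r| <= 1.
  At r = -1 the two clauses disagree; we take the first clause (value 1).\<close>
definition psi_ENO :: "real \<Rightarrow> real" where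
  "psi_ENO r = (if \<bar>r\<bar> \<ge> 1 then 1 else r)"

definition psi_prod :: "real \<Rightarrow> real \<Rightarrow> real" where
  "psi_prod num den = (if den = 0 then 0 else psi_ENO (num / den) * den)"

end

theory Submission
  imports Defs
begin

lemma psi_prod_bound: "\<exists>u. psi_prod a b = u * a \<and> \<bar>u\<bar> \<le> 1"
proof (cases "b = 0")
  case True then show ?thesis by (intro exI[of _ 0]) (simp add: psi_prod_def)
next
  case False
  show ?thesis
  proof (cases "\<bar>a / b\<bar> \<ge> 1")
    case True
    hence "\<bar>b\<bar> \<le> \<bar>a\<bar>" using False by (simp add: divide_simps split: if_splits)
    hence a0: "a \<noteq> 0" using False by auto
    show ?thesis
      apply (intro exI[of _ "b / a"])
      using True False a0 \<open>\<bar>b\<bar> \<le> \<bar>a\<bar>\<close>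
      by (simp add: psi_prod_def psi_ENO_def abs_divide divide_le_eq_1)
  next
    case F2: False
    show ?thesis
      apply (intro exI[of _ 1])
      using F2 False by (simp add: psi_prod_def psi_ENO_def)
  qed
qed

theorem mainTheorem2:
  fixes C Qnm2 Qnm1 Qn Qnp1 Qim1 :: real
  assumes "C > 0"
    and "Qn + (1/2) * psi_prod (Qn - Qnm1) (Qnp1 - Qn) + C * Qn
         = Qnm1 + (1/2) * psi_prod (Qnm1 - Qnm2) (Qn - Qnm1) + C * Qim1"
  shows "min Qnm1 Qim1 \<le> Qn \<and> Qn \<le> max Qnm1 Qim1"
proof -
  obtain u where u: "psi_prod (Qn - Qnm1) (Qnp1 - Qn) = u * (Qn - Qnm1)" "\<bar>u\<bar> \<le> 1"
    using psi_prod_bound by blast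
  obtain s where s: "psi_prod (Qnm1 - Qnm2) (Qn - Qnm1) = s * (Qn - Qnm1)" "\<bar>s\<bar> \<le> 1"
  proof (cases "Qn - Qnm1 = 0")
    case True then show ?thesis using that[of 0] by (simp add: psi_prod_def)
  next
    case False
    obtain v where v: "psi_prod (Qnm1 - Qnm2) (Qn - Qnm1) = v * (Qnm1 - Qnm2)" "\<bar>v\<bar> \<le> 1"
      using psi_prod_bound by blast
    show ?thesis
    proof (cases "\<bar>(Qnm1 - Qnm2) / (Qn - Qnm1)\<bar> \<ge> 1")
      case True then show ?thesis using that[of 1] False by (simp add: psi_prod_def psi_ENO_def)
    next
      case F2: False
      then show ?thesis using that[of "(Qnm1 - Qnm2) / (Qn - Qnm1)"] False
        by (simp add: psi_prod_def psi_ENO_def)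
    qed
  qed
  define d where "d = Qn - Qnm1"
  define k where "k = 1 + u/2 - s/2"
  have k: "k \<ge> 0" using u(2) s(2) unfolding k_def by (simp add: abs_le_iff)
  have eq0: "Qn + 1/2*(u*d) + C*Qn = Qnm1 + 1/2*(s*d) + C*Qim1"
    using assms(2) unfolding u(1) s(1) d_def .
  have eq: "d * k = C * (Qim1 - Qn)" using eq0 unfolding k_def
    by (simp add: algebra_simps d_def add_divide_distrib diff_divide_distrib)
  consider "k = 0" | "k > 0" using k by linarith
  then show ?thesis
  proof cases
    case 1
    then have "Qim1 = Qn" using eq assms(1) by simp
    then show ?thesis by simp
  next
    case 2
    have "d > 0 \<Longrightarrow> Qim1 > Qn" using eq 2 assms(1)
      by (smt (verit) zero_less_mult_iff)
    moreover have "d < 0 \<Longrightarrow> Qim1 < Qn" using eq 2 assms(1)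
      by (smt (verit) mult_less_0_iff)
    ultimately show ?thesis unfolding d_def by linarith
  qed
qed

end
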